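(* Let $\mathbb{X}$ be a Banach space and $\delta>0$. Suppose $V\subset\mathbb{X}$ is a $\delta$-separated set with $\#V\geq2$ and there exist a line $L$ and a number $0\leq\alpha<1/6$ with $\mathrm{dist}(v,L)\leq\alpha\delta$ for all $v\in V$. Let $\pi$ be a metric projection onto $L$, identify $L$ with $\mathbb{R}$ via an affine isometry, and enumerate $V=\{v_1,\dots,v_n\}$ so that $\pi(v_1)<\pi(v_2)<\dots<\pi(v_n)$. Then $$\sum_{i=1}^{n-1}|v_{i+1}-v_i|^s\leq(1+3\alpha)^{2s}|v_1-v_n|^s\quad\text{for all }s\in[1,\infty).$$
   Context: All Banach spaces are real; a line is a one-dimensional affine subspace. $V$ is $\delta$-separated if $|v-w|\geq\delta$ for all distinct $v,w\in V$. A metric projection onto $L$ is any map $\pi:\mathbb{X}\to L$ with $|x-\pi(x)|=\mathrm{dist}(x,L)$ for all $x$. (Under these hypotheses the points $\pi(v)$, $v\in V$, are distinct.) *)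

theory Defs
  imports "HOL-Analysis.Analysis"
begin

end

theory Submission
  imports Defs
begin

lemma sum_powr_le_powr_sum:
  fixes x :: "nat \<Rightarrow> real"
  assumes fin: "finite I" and nn: "\<forall>i\<in>I. x i \<ge> 0" and s: "s \<ge> 1"
  shows "(\<Sum>i\<in>I. x i powr s) \<le> (\<Sum>i\<in>I. x i) powr s"
proof -
  define S where "S = (\<Sum>i\<in>I. x i)"
  have S0: "S \<ge> 0" unfolding S_def using nn by (simp add: sum_nonneg)
  have le: "x i \<le> S" if "i \<in> I" for i
    unfolding S_def using fin nn that by (intro member_le_sum) auto
  have "x i powr s = x i * x i powr (s - 1)" if "i \<in> I" for i
  proof -
    have "x i powr s = x i powr (1 + (s - 1))" by simp
    also have "\<dots> = x i powr 1 * x i powr (s - 1)" by (rule powr_add)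
    finally show ?thesis using nn that by (simp add: powr_one)
  qed
  hence "(\<Sum>i\<in>I. x i powr s) = (\<Sum>i\<in>I. x i * x i powr (s - 1))" by simp
  also have "\<dots> \<le> (\<Sum>i\<in>I. x i * S powr (s - 1))"
    apply (rule sum_mono)
    apply (rule mult_left_mono)
    using nn le s by (auto intro!: powr_mono2)
  also have "\<dots> = S * S powr (s - 1)" unfolding S_def by (simp add: sum_distrib_right)
  also have "\<dots> = S powr s"
  proof -
    have "S powr s = S powr (1 + (s - 1))" by simp
    also have "\<dots> = S powr 1 * S powr (s - 1)" by (rule powr_add)
    finally show ?thesis using S0 by (simp add: powr_one)
  qed
  finally show ?thesis unfolding S_def .
qed

theorem mainTheorem11:
  fixes V :: "'a::banach set" and \<delta> \<alpha> s :: real and p e :: 'a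
    and \<pi> :: "'a \<Rightarrow> 'a" and v :: "nat \<Rightarrow> 'a" and n :: nat
  defines "L \<equiv> range (\<lambda>t::real. p + t *\<^sub>R e)"
  assumes delta_pos: "\<delta> > 0"
    and sep: "\<forall>x\<in>V. \<forall>y\<in>V. x \<noteq> y \<longrightarrow> norm (x - y) \<ge> \<delta>"
    and finV: "finite V" and cardV: "card V \<ge> 2"
    and e_unit: "norm e = 1"
    and alpha: "0 \<le> \<alpha>" "\<alpha> < 1/6"
    and close: "\<forall>x\<in>V. infdist x L \<le> \<alpha> * \<delta>"
    and proj: "\<forall>x. \<pi> x \<in> L \<and> norm (x - \<pi> x) = infdist x L"
    and n_def: "n = card V"
    and enum: "V = v ` {1..n}"
    and order: "\<forall>i\<in>{1..<n}. \<exists>a b. \<pi> (v i) = p + a *\<^sub>R e \<and> \<pi> (v (i+1)) = p + b *\<^sub>R e \<and> a < b"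
    and s: "s \<ge> 1"
  shows "(\<Sum>i=1..<n. norm (v (i+1) - v i) powr s) \<le> ((1 + 3 * \<alpha>) powr (2 * s)) * (norm (v 1 - v n) powr s)"
proof -
  have n2: "n \<ge> 2" using cardV n_def by simp
  have vin: "v i \<in> V" if "i \<in> {1..n}" for i using enum that by auto
  have e0: "e \<noteq> 0" using e_unit by auto
  have ex: "\<exists>a. \<pi> x = p + a *\<^sub>R e" for x using proj unfolding L_def by auto
  define t where "t x = (SOME a. \<pi> x = p + a *\<^sub>R e)" for x
  have tp: "\<pi> x = p + t x *\<^sub>R e" for x unfolding t_def by (rule someI_ex[OF ex])
  have uniq: "a = b" if "p + a *\<^sub>R e = p + b *\<^sub>R e" for a b
    using that e0 by simp
  have tord: "t (v i) < t (v (i+1))" if ii: "i \<in> {1..<n}" for i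
  proof -
    obtain a b where ab: "\<pi> (v i) = p + a *\<^sub>R e" "\<pi> (v (i+1)) = p + b *\<^sub>R e" "a < b"
      using order ii by blast
    have "t (v i) = a" using uniq tp ab(1) by metis
    moreover have "t (v (i+1)) = b" using uniq tp ab(2) by metis
    ultimately show ?thesis using ab(3) by simp
  qed
  have pdist: "norm (\<pi> x - \<pi> y) = \<bar>t x - t y\<bar>" for x y
  proof -
    have "\<pi> x - \<pi> y = (t x - t y) *\<^sub>R e" using tp[of x] tp[of y] by (simp add: algebra_simps)
    thus ?thesis using e_unit by simp
  qed
  have dist: "norm (x - \<pi> x) \<le> \<alpha> * \<delta>" if "x \<in> V" for x using proj close that by simp
  have decomp: "x - y = (\<pi> x - \<pi> y) + ((x - \<pi> x) - (y - \<pi> y))" for x y :: 'a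
    by (simp add: algebra_simps)
  have upper: "norm (x - y) \<le> \<bar>t x - t y\<bar> + 2 * \<alpha> * \<delta>" if "x \<in> V" "y \<in> V" for x y
  proof -
    have "norm (x - y) \<le> norm (\<pi> x - \<pi> y) + norm ((x - \<pi> x) - (y - \<pi> y))"
      by (subst decomp) (rule norm_triangle_ineq)
    also have "norm ((x - \<pi> x) - (y - \<pi> y)) \<le> norm (x - \<pi> x) + norm (y - \<pi> y)"
      by (rule norm_triangle_ineq4)
    finally show ?thesis using dist[OF that(1)] dist[OF that(2)] pdist[of x y] by simp
  qed
  have lower: "\<bar>t x - t y\<bar> - 2 * \<alpha> * \<delta> \<le> norm (x - y)" if "x \<in> V" "y \<in> V" for x y
  proof -
    have "\<pi> x - \<pi> y = (x - y) - ((x - \<pi> x) - (y - \<pi> y))" by (simp add: algebra_simps)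
    hence "norm (\<pi> x - \<pi> y) \<le> norm (x - y) + norm ((x - \<pi> x) - (y - \<pi> y))"
      by (metis norm_triangle_ineq4)
    also have "norm ((x - \<pi> x) - (y - \<pi> y)) \<le> norm (x - \<pi> x) + norm (y - \<pi> y)"
      by (rule norm_triangle_ineq4)
    finally show ?thesis using dist[OF that(1)] dist[OF that(2)] pdist[of x y] by simp
  qed
  define T where "T i = t (v i)" for i
  define c where "c = 1 / (1 - 2 * \<alpha>)"
  have a12: "1 - 2 * \<alpha> > 0" using alpha by simp
  have step: "(1 - 2 * \<alpha>) * \<delta> \<le> T (i+1) - T i \<and> norm (v (i+1) - v i) \<le> c * (T (i+1) - T i)"
    if i: "i \<in> {1..<n}" for i
  proof -
    have vi: "v i \<in> V" "v (i+1) \<in> V" using vin i by auto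
    have lt: "T i < T (i+1)" using tord i unfolding T_def by simp
    hence "v (i+1) \<noteq> v i" unfolding T_def by auto
    hence dl: "\<delta> \<le> norm (v (i+1) - v i)" using sep vi by blast
    have up: "norm (v (i+1) - v i) \<le> (T (i+1) - T i) + 2 * \<alpha> * \<delta>"
      using upper[OF vi(2) vi(1)] lt unfolding T_def by simp
    have g: "(1 - 2 * \<alpha>) * \<delta> \<le> T (i+1) - T i" using dl up by (simp add: algebra_simps)
    have "2 * \<alpha> * \<delta> \<le> 2 * \<alpha> * ((T (i+1) - T i) / (1 - 2 * \<alpha>))"
    proof -
      have "\<delta> \<le> (T (i+1) - T i) / (1 - 2 * \<alpha>)"
        using g a12 by (simp add: pos_le_divide_eq mult.commute)
      thus ?thesis using alpha by (intro mult_left_mono) auto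
    qed
    hence "norm (v (i+1) - v i) \<le> (T (i+1) - T i) * (1 + 2 * \<alpha> / (1 - 2 * \<alpha>))"
      using up by (simp add: algebra_simps)
    also have "(1 + 2 * \<alpha> / (1 - 2 * \<alpha>)) = c" unfolding c_def using a12 by (simp add: field_simps)
    finally show ?thesis using g by (simp add: mult.commute)
  qed
  have tel: "T n - T 1 = (\<Sum>i=1..<n. T (i+1) - T i)"
    using sum_Suc_diff'[of 1 n T] n2 by simp
  have c0: "c > 0" unfolding c_def using a12 by simp
  have fac1: "(1 + 3 * \<alpha>) powr (2 * s) = ((1 + 3 * \<alpha>)^2) powr s"
  proof -
    have "(1 + 3 * \<alpha>)^2 = (1 + 3 * \<alpha>) powr 2" using alpha by (simp add: powr_numeral)
    thus ?thesis by (simp add: powr_powr)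
  qed
  show ?thesis
  proof (cases "n = 2")
    case True
    have ge1: "1 \<le> (1 + 3 * \<alpha>) powr (2 * s)" using alpha s by (simp add: ge_one_powr_ge_zero)
    have "norm (v 1 - v 2) = norm (v 2 - v 1)" by (rule norm_minus_commute)
    moreover have "{1..<2::nat} = {1}" by auto
    moreover have "norm (v 2 - v 1) powr s \<le> (1 + 3 * \<alpha>) powr (2 * s) * norm (v 2 - v 1) powr s"
      using mult_right_mono[OF ge1, of "norm (v 2 - v 1) powr s"] by simp
    ultimately show ?thesis using True by (simp add: numeral_2_eq_2)
  next
    case False
    hence n3: "n \<ge> 3" using n2 by linarith
    have v1n: "v 1 \<in> V" "v n \<in> V" using vin[of 1] vin[of n] n2 by auto
    define D where "D = norm (v 1 - v n)"
    have "(\<Sum>i=1..<n. (1 - 2 * \<alpha>) * \<delta>) \<le> (\<Sum>i=1..<n. T (i+1) - T i)"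
      by (rule sum_mono) (use step in auto)
    hence "real (n - 1) * ((1 - 2 * \<alpha>) * \<delta>) \<le> T n - T 1" using tel by simp
    moreover have "2 * ((1 - 2 * \<alpha>) * \<delta>) \<le> real (n - 1) * ((1 - 2 * \<alpha>) * \<delta>)"
      apply (rule mult_right_mono) using n3 a12 delta_pos by auto
    ultimately have Tbig: "2 * ((1 - 2 * \<alpha>) * \<delta>) \<le> T n - T 1" by linarith
    have Tpos: "T n - T 1 \<ge> 0" using Tbig a12 delta_pos by (smt (verit) mult_pos_pos)
    have Dlow: "(T n - T 1) - 2 * \<alpha> * \<delta> \<le> D"
      using lower[OF v1n(2) v1n(1)] unfolding D_def T_def by (simp add: norm_minus_commute)
    have "\<alpha> * (2 * ((1 - 2 * \<alpha>) * \<delta>)) \<le> \<alpha> * (T n - T 1)"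
      using Tbig alpha by (simp add: mult_left_mono)
    moreover have "(1 - 2*\<alpha>) * ((T n - T 1) - 2 * \<alpha> * \<delta>) \<le> (1 - 2*\<alpha>) * D"
      using Dlow a12 by (intro mult_left_mono) auto
    ultimately have k: "(1 - 3 * \<alpha>) * (T n - T 1) \<le> (1 - 2 * \<alpha>) * D"
      by (simp add: algebra_simps)
    have poly: "1 \<le> (1 + 3 * \<alpha>)^2 * (1 - 3 * \<alpha>)"
    proof -
      have "(1 + 3 * \<alpha>)^2 * (1 - 3 * \<alpha>) = 1 + 3 * \<alpha> * (1 - 3 * \<alpha> - 9 * \<alpha>^2)"
        by (simp add: power2_eq_square algebra_simps)
      moreover have "0 \<le> 1 - 3 * \<alpha> - 9 * \<alpha>^2"
      proof -
        have "\<alpha>^2 \<le> (1/6)^2" using alpha by (intro power_mono) auto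
        hence "\<alpha>^2 \<le> 1/36" by (simp add: power2_eq_square)
        thus ?thesis using alpha by linarith
      qed
      ultimately show ?thesis using alpha by simp
    qed
    have key: "c * (T n - T 1) \<le> (1 + 3 * \<alpha>)^2 * D"
    proof -
      have "T n - T 1 \<le> (1 + 3 * \<alpha>)^2 * (1 - 3 * \<alpha>) * (T n - T 1)"
        using mult_right_mono[OF poly Tpos] by simp
      also have "\<dots> \<le> (1 + 3 * \<alpha>)^2 * ((1 - 2 * \<alpha>) * D)"
        using k by (simp add: mult.assoc mult_left_mono)
      finally have "T n - T 1 \<le> (1 - 2 * \<alpha>) * ((1 + 3 * \<alpha>)^2 * D)" by (simp add: algebra_simps)
      thus ?thesis unfolding c_def using a12 by (simp add: field_simps)
    qed
    have "(\<Sum>i=1..<n. norm (v (i+1) - v i) powr s) \<le> (\<Sum>i=1..<n. (c * (T (i+1) - T i)) powr s)"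
      apply (rule sum_mono) apply (rule powr_mono2) using s step by auto
    also have "\<dots> \<le> (\<Sum>i=1..<n. c * (T (i+1) - T i)) powr s"
    proof -
      have dp: "(1 - 2 * \<alpha>) * \<delta> > 0" using a12 delta_pos by simp
      have nonneg: "\<forall>i\<in>{1..<n}. 0 \<le> c * (T (i + 1) - T i)"
      proof
        fix i assume "i \<in> {1..<n}"
        hence "(1 - 2 * \<alpha>) * \<delta> \<le> T (i+1) - T i" using step by blast
        thus "0 \<le> c * (T (i + 1) - T i)" using dp c0 by simp
      qed
      show ?thesis by (rule sum_powr_le_powr_sum[OF finite_atLeastLessThan nonneg s])
    qed
    also have "(\<Sum>i=1..<n. c * (T (i+1) - T i)) = c * (T n - T 1)"
      using tel by (simp add: sum_distrib_left)
    also have "(c * (T n - T 1)) powr s \<le> ((1 + 3 * \<alpha>)^2 * D) powr s"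
      apply (rule powr_mono2) using s c0 Tpos key by auto
    also have "\<dots> = ((1 + 3 * \<alpha>)^2) powr s * D powr s"
      using powr_mult[of "(1 + 3 * \<alpha>)^2" D s] by (simp add: D_def)
    finally show ?thesis using fac1 unfolding D_def by simp
  qed
qed

end
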